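(* Let $M := \langle X \mid R\rangle$ where $X$ is irredundant, and suppose that $M$ is normalizing, cancellative, and BF. (1) For all $x,y\in X$ there exists $z\in X$ such that $xy =_M zx$. (2) Suppose $X$ is finite and nonempty, $X = \{x_1,\dots,x_n\}$ with $n\in\mathbb{N}^+$. Then for each $a\in\langle X\rangle$ there is a (necessarily unique) word $\nu(a)\in\langle X\rangle$ with $a =_M \nu(a)$, $|a| = |\nu(a)|$, $\nu(a) = x_1^{m_1}\cdots x_n^{m_n}$ with each $m_i\in\mathbb{N}$, and such that $(m_1,\dots,m_n)$ is minimal in the lexicographic order on $\mathbb{N}^n$ among all tuples $(m_1',\dots,m_n')\in\mathbb{N}^n$ with $a =_M x_1^{m_1'}\cdots x_n^{m_n'}$ and $m_1'+\cdots+m_n' = |a|$.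
   Context: For a set $X$, $\langle X\rangle$ is the free monoid on $X$ (identity $1$); $M=\langle X\mid R\rangle$ is the monoid presented by generators $X$ and relations $R\subseteq\langle X\rangle\times\langle X\rangle$. $|a|$ is word length; $a=_M b$ means equal images in $M$. $X$ is irredundant if no proper subset of $X$ generates $M$. $M$ is normalizing if $aM = Ma$ for all $a\in M$; cancellative if $ab=ac$ or $ba=ca$ implies $b=c$. $\mathsf{L}_M(a):=\{|b| : b\in\langle X\rangle,\ b=_M a\}$; $M$ is BF if $\mathsf{L}_M(a)$ is finite for all $a\in\langle X\rangle$. *)

theory Defs
  imports Main
begin

inductive eqM :: "('a list \<times> 'a list) set \<Rightarrow> 'a list \<Rightarrow> 'a list \<Rightarrow> bool" for R where
  rel: "(l, r) \<in> R \<Longrightarrow> eqM R (u @ l @ v) (u @ r @ v)"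
| refl: "eqM R a a"
| sym: "eqM R a b \<Longrightarrow> eqM R b a"
| trans: "eqM R a b \<Longrightarrow> eqM R b c \<Longrightarrow> eqM R a c"

definition generates :: "'a set \<Rightarrow> ('a list \<times> 'a list) set \<Rightarrow> 'a set \<Rightarrow> bool" where
  "generates X R Y \<longleftrightarrow> (\<forall>a\<in>lists X. \<exists>b\<in>lists Y. eqM R a b)"

definition irredundant :: "'a set \<Rightarrow> ('a list \<times> 'a list) set \<Rightarrow> bool" where
  "irredundant X R \<longleftrightarrow> (\<forall>Y. Y \<subset> X \<longrightarrow> \<not> generates X R Y)"

definition normalizing :: "'a set \<Rightarrow> ('a list \<times> 'a list) set \<Rightarrow> bool" where
  "normalizing X R \<longleftrightarrow> (\<forall>a\<in>lists X.
     (\<forall>b\<in>lists X. \<exists>c\<in>lists X. eqM R (a @ b) (c @ a)) \<and>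
     (\<forall>b\<in>lists X. \<exists>c\<in>lists X. eqM R (b @ a) (a @ c)))"

definition cancellative :: "'a set \<Rightarrow> ('a list \<times> 'a list) set \<Rightarrow> bool" where
  "cancellative X R \<longleftrightarrow> (\<forall>a\<in>lists X. \<forall>b\<in>lists X. \<forall>c\<in>lists X.
     (eqM R (a @ b) (a @ c) \<longrightarrow> eqM R b c) \<and> (eqM R (b @ a) (c @ a) \<longrightarrow> eqM R b c))"

definition lengths :: "'a set \<Rightarrow> ('a list \<times> 'a list) set \<Rightarrow> 'a list \<Rightarrow> nat set" where
  "lengths X R a = {length b | b. b \<in> lists X \<and> eqM R b a}"

definition BF :: "'a set \<Rightarrow> ('a list \<times> 'a list) set \<Rightarrow> bool" where
  "BF X R \<longleftrightarrow> (\<forall>a\<in>lists X. finite (lengths X R a))"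

definition pword :: "'a list \<Rightarrow> nat list \<Rightarrow> 'a list" where
  "pword xs ms = concat (map (\<lambda>(x, m). replicate m x) (zip xs ms))"

definition lex_less :: "nat list \<Rightarrow> nat list \<Rightarrow> bool" where
  "lex_less ms ms' \<longleftrightarrow> (ms, ms') \<in> lexord {(i, j). i < j}"

end

theory Submission imports Defs begin

lemma eqM_lists:
  assumes "eqM R a b" "R \<subseteq> lists X \<times> lists X"
  shows "a \<in> lists X \<longleftrightarrow> b \<in> lists X"
  using assms(1) by induction (use assms(2) in auto)

lemma eqM_cong: "eqM R a b \<Longrightarrow> eqM R (u @ a @ v) (u @ b @ v)"
proof (induction rule: eqM.induct)
  case (rel l r u' v')
  then show ?case using eqM.rel[of l r R "u @ u'" "v' @ v"] by simp
next
  case (refl a) then show ?case by (rule eqM.refl)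
next
  case (sym a b) from sym.IH show ?case by (rule eqM.sym)
next
  case (trans a b c) from trans.IH show ?case by (rule eqM.trans)
qed

lemma eqM_app: "eqM R a b \<Longrightarrow> eqM R c d \<Longrightarrow> eqM R (a @ c) (b @ d)"
proof -
  assume 1: "eqM R a b" and 2: "eqM R c d"
  have "eqM R ([] @ a @ c) ([] @ b @ c)" by (rule eqM_cong[OF 1])
  moreover have "eqM R (b @ c @ []) (b @ d @ [])" by (rule eqM_cong[OF 2])
  ultimately show ?thesis by (auto intro: eqM.trans)
qed

lemma no_units:
  assumes "BF X R" "R \<subseteq> lists X \<times> lists X" "w \<in> lists X" "eqM R w []"
  shows "w = []"
proof (rule ccontr)
  assume ne: "w \<noteq> []"
  have pw: "eqM R (concat (replicate k w)) []" for k
  proof (induction k)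
    case 0 then show ?case by (simp add: eqM.refl)
  next
    case (Suc k) then show ?case using eqM_app[OF assms(4) Suc] by simp
  qed
  have inl: "concat (replicate k w) \<in> lists X" for k using assms(3) by auto
  have mem: "k * length w \<in> lengths X R []" for k
  proof -
    have "length (concat (replicate k w)) = k * length w" by (simp add: length_concat sum_list_replicate)
    then show ?thesis unfolding lengths_def using pw[of k] inl[of k] by (smt (verit) mem_Collect_eq)
  qed
  have fin: "finite (lengths X R [])" using assms(1) unfolding BF_def by auto
  let ?m = "Max (lengths X R [])"
  have "Suc ?m * length w \<le> ?m" using Max_ge[OF fin mem] by blast
  moreover have "length w \<ge> 1" using ne by (cases w) auto
  ultimately show False
    by (metis Suc_n_not_le_n le_trans mult.right_neutral mult_le_mono2)
qed

definition maxlen :: "'a set \<Rightarrow> ('a list \<times> 'a list) set \<Rightarrow> 'a list \<Rightarrow> nat" where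
  "maxlen X R a = Max (lengths X R a)"

lemma lengths_eq: "eqM R a a' \<Longrightarrow> lengths X R a = lengths X R a'"
  unfolding lengths_def by (blast intro: eqM.trans eqM.sym)

lemma maxlen_eq: "eqM R a a' \<Longrightarrow> maxlen X R a = maxlen X R a'"
  unfolding maxlen_def using lengths_eq by metis

lemma maxlen_ge:
  assumes "BF X R" "a \<in> lists X" "b \<in> lists X" "eqM R b a"
  shows "length b \<le> maxlen X R a"
proof -
  have "finite (lengths X R a)" using assms unfolding BF_def by auto
  moreover have "length b \<in> lengths X R a" unfolding lengths_def using assms by auto
  ultimately show ?thesis unfolding maxlen_def by simp
qed

lemma maxlen_obtain:
  assumes "BF X R" "a \<in> lists X"
  obtains b where "b \<in> lists X" "eqM R b a" "length b = maxlen X R a"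
proof -
  have fin: "finite (lengths X R a)" using assms unfolding BF_def by auto
  have "length a \<in> lengths X R a" unfolding lengths_def using assms by (auto intro: eqM.refl)
  then have "lengths X R a \<noteq> {}" by auto
  then have "maxlen X R a \<in> lengths X R a" unfolding maxlen_def using Max_in[OF fin] by auto
  then show ?thesis using that unfolding lengths_def by (smt (verit) mem_Collect_eq)
qed

lemma maxlen_len:
  assumes "BF X R" "a \<in> lists X"
  shows "length a \<le> maxlen X R a"
  using maxlen_ge[OF assms assms(2) eqM.refl] .

lemma maxlen_super:
  assumes "BF X R" "R \<subseteq> lists X \<times> lists X" "u \<in> lists X" "v \<in> lists X"
  shows "maxlen X R u + maxlen X R v \<le> maxlen X R (u @ v)"
proof -
  obtain u' where u': "u' \<in> lists X" "eqM R u' u" "length u' = maxlen X R u"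
    using maxlen_obtain[OF assms(1,3)] by blast
  obtain v' where v': "v' \<in> lists X" "eqM R v' v" "length v' = maxlen X R v"
    using maxlen_obtain[OF assms(1,4)] by blast
  have "length (u' @ v') \<le> maxlen X R (u @ v)"
    by (rule maxlen_ge) (use assms u' v' eqM_app in auto)
  then show ?thesis using u' v' by simp
qed


lemma words_gen:
  assumes "\<forall>z\<in>set d. \<exists>b\<in>lists Y. eqM R [z] b"
  shows "\<exists>b\<in>lists Y. eqM R d b"
  using assms
proof (induction d)
  case Nil then show ?case by (auto intro: eqM.refl)
next
  case (Cons z d)
  then obtain b1 b2 where "b1 \<in> lists Y" "eqM R [z] b1" "b2 \<in> lists Y" "eqM R d b2" by auto
  then show ?case using eqM_app[of R "[z]" b1 d b2] by (intro bexI[of _ "b1 @ b2"]) auto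
qed

lemma atoms:
  assumes R: "R \<subseteq> lists X \<times> lists X" and irr: "irredundant X R" and bf: "BF X R"
    and y: "y \<in> X" and d: "d1 \<in> lists X" "d2 \<in> lists X" "eqM R [y] (d1 @ d2)"
  shows "d1 = [] \<or> d2 = []"
proof -
  define Y where "Y = {y\<in>X. \<forall>d1\<in>lists X. \<forall>d2\<in>lists X. eqM R [y] (d1 @ d2) \<longrightarrow> d1 = [] \<or> d2 = []}"
  have let_sub: "maxlen X R [z] \<le> maxlen X R w" if wl: "w \<in> lists X" and zw: "z \<in> set w" for z w
  proof -
    obtain p q where w: "w = p @ z # q" using split_list[OF zw] by blast
    have "maxlen X R p + maxlen X R ([z] @ q) \<le> maxlen X R (p @ [z] @ q)"
      by (rule maxlen_super) (use R bf wl w in auto)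
    moreover have "maxlen X R [z] + maxlen X R q \<le> maxlen X R ([z] @ q)"
      by (rule maxlen_super) (use R bf wl w in auto)
    ultimately show ?thesis using w by simp
  qed
  have key: "\<forall>x\<in>X. maxlen X R [x] = n \<longrightarrow> (\<exists>b\<in>lists Y. eqM R [x] b)" for n
  proof (induction n rule: less_induct)
    case (less n)
    show ?case
    proof (intro ballI impI)
      fix x assume x: "x \<in> X" "maxlen X R [x] = n"
      show "\<exists>b\<in>lists Y. eqM R [x] b"
      proof (cases "x \<in> Y")
        case True then show ?thesis by (auto intro: eqM.refl)
      next
        case False
        then obtain e1 e2 where e: "e1 \<in> lists X" "e2 \<in> lists X" "eqM R [x] (e1 @ e2)"
          "e1 \<noteq> []" "e2 \<noteq> []" using x unfolding Y_def by auto
        have "maxlen X R e1 + maxlen X R e2 \<le> maxlen X R (e1 @ e2)"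
          by (rule maxlen_super) (use R bf e in auto)
        moreover have "maxlen X R (e1 @ e2) = n" using maxlen_eq[OF e(3)] x by simp
        moreover have "length e1 \<le> maxlen X R e1" "length e2 \<le> maxlen X R e2"
          using maxlen_len[OF bf] e by auto
        moreover have "length e1 \<ge> 1" "length e2 \<ge> 1" using e by (auto simp: Suc_le_eq)
        ultimately have lt: "maxlen X R e1 < n" "maxlen X R e2 < n" by linarith+
        have g: "\<exists>b\<in>lists Y. eqM R e b" if "e \<in> lists X" "maxlen X R e < n" for e
        proof (rule words_gen, intro ballI)
          fix z assume z: "z \<in> set e"
          have "maxlen X R [z] < n" using let_sub[OF that(1) z] that(2) by simp
          then show "\<exists>b\<in>lists Y. eqM R [z] b" using less.IH[of "maxlen X R [z]"] z that(1) by auto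
        qed
        obtain b1 b2 where "b1 \<in> lists Y" "eqM R e1 b1" "b2 \<in> lists Y" "eqM R e2 b2"
          using g[OF e(1) lt(1)] g[OF e(2) lt(2)] by blast
        then show ?thesis using eqM_app[of R e1 b1 e2 b2] e(3) by (intro bexI[of _ "b1 @ b2"]) (auto intro: eqM.trans)
      qed
    qed
  qed
  have "generates X R Y" unfolding generates_def
  proof
    fix a assume "a \<in> lists X"
    then show "\<exists>b\<in>lists Y. eqM R a b" using key by (intro words_gen) auto
  qed
  moreover have "Y \<subseteq> X" unfolding Y_def by auto
  ultimately have "Y = X" using irr unfolding irredundant_def by blast
  then show ?thesis using y d unfolding Y_def by blast
qed


lemma cancel_l: "cancellative X R \<Longrightarrow> a \<in> lists X \<Longrightarrow> b \<in> lists X \<Longrightarrow> c \<in> lists X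
  \<Longrightarrow> eqM R (a @ b) (a @ c) \<Longrightarrow> eqM R b c"
  unfolding cancellative_def by blast

lemma cancel_r: "cancellative X R \<Longrightarrow> a \<in> lists X \<Longrightarrow> b \<in> lists X \<Longrightarrow> c \<in> lists X
  \<Longrightarrow> eqM R (b @ a) (c @ a) \<Longrightarrow> eqM R b c"
  unfolding cancellative_def by blast

lemma norm1: "normalizing X R \<Longrightarrow> a \<in> lists X \<Longrightarrow> b \<in> lists X \<Longrightarrow> \<exists>c\<in>lists X. eqM R (a @ b) (c @ a)"
  unfolding normalizing_def by blast

lemma norm2: "normalizing X R \<Longrightarrow> a \<in> lists X \<Longrightarrow> b \<in> lists X \<Longrightarrow> \<exists>c\<in>lists X. eqM R (b @ a) (a @ c)"
  unfolding normalizing_def by blast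

lemma part1:
  assumes R: "R \<subseteq> lists X \<times> lists X" and irr: "irredundant X R" and nm: "normalizing X R"
    and cn: "cancellative X R" and bf: "BF X R" and x: "x \<in> X" and y: "y \<in> X"
  shows "\<exists>z\<in>X. eqM R [x, y] [z, x]"
proof -
  obtain c where c: "c \<in> lists X" "eqM R ([x] @ [y]) (c @ [x])" using norm1[OF nm, of "[x]" "[y]"] x y by auto
  have "c \<noteq> []"
  proof
    assume "c = []"
    then have "eqM R ([x] @ [y]) ([x] @ [])" using c by simp
    then have "eqM R [y] []" using cancel_l[OF cn, of "[x]" "[y]" "[]"] x y by auto
    then show False using no_units[OF bf R, of "[y]"] y by auto
  qed
  then obtain c1 cs where cc: "c = c1 # cs" by (cases c) auto
  have "cs = []"
  proof (rule ccontr)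
    assume csne: "cs \<noteq> []"
    obtain d1 where d1: "d1 \<in> lists X" "eqM R ([c1] @ [x]) ([x] @ d1)" using norm2[OF nm, of "[x]" "[c1]"] x c cc by auto
    obtain d2 where d2: "d2 \<in> lists X" "eqM R (cs @ [x]) ([x] @ d2)" using norm2[OF nm, of "[x]" cs] x c cc by auto
    have "eqM R ([c1] @ cs @ [x]) ([c1] @ [x] @ d2)" using eqM_cong[OF d2(2), of "[c1]" "[]"] by simp
    moreover have "eqM R ([c1] @ [x] @ d2) ([x] @ d1 @ d2)" using eqM_cong[OF d1(2), of "[]" d2] by simp
    ultimately have "eqM R ([x] @ [y]) ([x] @ d1 @ d2)" using c(2) cc by (auto intro: eqM.trans)
    then have "eqM R [y] (d1 @ d2)" using cancel_l[OF cn, of "[x]" "[y]" "d1 @ d2"] x y d1 d2 by auto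
    then have "d1 = [] \<or> d2 = []" using atoms[OF R irr bf y d1(1) d2(1)] by blast
    then show False
    proof
      assume "d1 = []"
      then have "eqM R ([c1] @ [x]) ([] @ [x])" using d1 by simp
      then have "eqM R [c1] []" using cancel_r[OF cn, of "[x]" "[c1]" "[]"] x c cc by auto
      then show False using no_units[OF bf R, of "[c1]"] c cc by auto
    next
      assume "d2 = []"
      then have "eqM R (cs @ [x]) ([] @ [x])" using d2 by simp
      then have "eqM R cs []" using cancel_r[OF cn, of "[x]" cs "[]"] x c cc by auto
      then show False using no_units[OF bf R, of cs] c cc csne by auto
    qed
  qed
  then show ?thesis using c cc by auto
qed

lemma part1':
  assumes R: "R \<subseteq> lists X \<times> lists X" and irr: "irredundant X R" and nm: "normalizing X R"
    and cn: "cancellative X R" and bf: "BF X R" and x: "x \<in> X" and y: "y \<in> X"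
  shows "\<exists>w\<in>X. eqM R [y, x] [x, w]"
proof -
  obtain c where c: "c \<in> lists X" "eqM R ([y] @ [x]) ([x] @ c)" using norm2[OF nm, of "[x]" "[y]"] x y by auto
  have "c \<noteq> []"
  proof
    assume "c = []"
    then have "eqM R ([y] @ [x]) ([] @ [x])" using c by simp
    then have "eqM R [y] []" using cancel_r[OF cn, of "[x]" "[y]" "[]"] x y by auto
    then show False using no_units[OF bf R, of "[y]"] y by auto
  qed
  then obtain c1 cs where cc: "c = c1 # cs" by (cases c) auto
  have "cs = []"
  proof (rule ccontr)
    assume csne: "cs \<noteq> []"
    obtain d1 where d1: "d1 \<in> lists X" "eqM R ([x] @ [c1]) (d1 @ [x])" using norm1[OF nm, of "[x]" "[c1]"] x c cc by auto
    obtain d2 where d2: "d2 \<in> lists X" "eqM R ([x] @ cs) (d2 @ [x])" using norm1[OF nm, of "[x]" cs] x c cc by auto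
    have "eqM R ([x] @ [c1] @ cs) (d1 @ [x] @ cs)" using eqM_cong[OF d1(2), of "[]" cs] by simp
    moreover have "eqM R (d1 @ [x] @ cs) (d1 @ d2 @ [x])" using eqM_cong[OF d2(2), of d1 "[]"] by simp
    ultimately have "eqM R ([y] @ [x]) ((d1 @ d2) @ [x])" using c(2) cc by (auto intro: eqM.trans)
    then have "eqM R [y] (d1 @ d2)" using cancel_r[OF cn, of "[x]" "[y]" "d1 @ d2"] x y d1 d2 by auto
    then have "d1 = [] \<or> d2 = []" using atoms[OF R irr bf y d1(1) d2(1)] by blast
    then show False
    proof
      assume "d1 = []"
      then have "eqM R ([x] @ [c1]) ([x] @ [])" using d1 by simp
      then have "eqM R [c1] []" using cancel_l[OF cn, of "[x]" "[c1]" "[]"] x c cc by auto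
      then show False using no_units[OF bf R, of "[c1]"] c cc by auto
    next
      assume "d2 = []"
      then have "eqM R ([x] @ cs) ([x] @ [])" using d2 by simp
      then have "eqM R cs []" using cancel_l[OF cn, of "[x]" cs "[]"] x c cc by auto
      then show False using no_units[OF bf R, of cs] c cc csne by auto
    qed
  qed
  then show ?thesis using c cc by auto
qed


lemma sort_exists:
  fixes f :: "'a \<Rightarrow> nat"
  assumes sw: "\<forall>x\<in>X. \<forall>y\<in>X. \<exists>w\<in>X. eqM R [y, x] [x, w]"
  shows "a \<in> lists X \<Longrightarrow> \<exists>b\<in>lists X. eqM R a b \<and> length b = length a \<and> sorted (map f b)"
proof -
  have wf: "wf (lex (inv_image less_than f))" by (intro wf_lex wf_inv_image wf_less_than)
  show "a \<in> lists X \<Longrightarrow> ?thesis"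
  using wf proof (induction a rule: wf_induct_rule)
    case (less a)
    show ?case
    proof (cases "sorted (map f a)")
      case True then show ?thesis using less.prems by (auto intro: eqM.refl)
    next
      case False
      then obtain i where i: "Suc i < length a" "f (a ! i) > f (a ! Suc i)"
        unfolding sorted_iff_nth_Suc by (auto simp: not_le)
      define y where "y = a ! i"
      define x where "x = a ! Suc i"
      have xy: "x \<in> X" "y \<in> X" using less.prems i unfolding x_def y_def by auto
      obtain w where w: "w \<in> X" "eqM R [y, x] [x, w]" using sw xy by blast
      have adec: "a = take i a @ [y, x] @ drop (Suc (Suc i)) a"
        unfolding x_def y_def using i
        by (metis Cons_nth_drop_Suc Suc_lessD append_Cons append_Nil append_take_drop_id)
      define a2 where "a2 = take i a @ [x, w] @ drop (Suc (Suc i)) a"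
      have e: "eqM R a a2" unfolding a2_def using eqM_cong[OF w(2)] adec by metis
      have l2: "length a2 = length a" unfolding a2_def using i by simp
      have h1: "a2 = take i a @ x # (w # drop (Suc (Suc i)) a)" unfolding a2_def by simp
      have h2: "a = take i a @ y # (x # drop (Suc (Suc i)) a)" using adec by simp
      have h3: "(x, y) \<in> inv_image less_than f" using i unfolding x_def y_def by simp
      have "(a2, a) \<in> lex (inv_image less_than f)"
        unfolding lex_conv using l2 h1 h2 h3 by blast
      moreover have "a2 \<in> lists X" unfolding a2_def using less.prems w xy
        by (auto dest: in_set_takeD in_set_dropD)
      ultimately obtain b where "b \<in> lists X" "eqM R a2 b" "length b = length a2" "sorted (map f b)"
        using less.IH by blast
      moreover have "length a2 = length a" unfolding a2_def using i by simp
      ultimately show ?thesis using e by (auto intro: eqM.trans)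
    qed
  qed
qed

lemma pword_Cons: "pword (x # xs) (m # ms) = replicate m x @ pword xs ms"
  unfolding pword_def by simp

lemma pword_Nil: "pword [] ms = []"
  unfolding pword_def by simp

lemma length_pword: "length ms = length xs \<Longrightarrow> length (pword xs ms) = sum_list ms"
  by (induction ms xs rule: list_induct2) (auto simp: pword_Cons pword_Nil)

lemma sorted_pword:
  fixes f :: "'a \<Rightarrow> nat"
  assumes "sorted_wrt (<) (map f xs)" "set b \<subseteq> set xs" "sorted (map f b)"
  shows "\<exists>ms. length ms = length xs \<and> b = pword xs ms"
  using assms
proof (induction xs arbitrary: b)
  case Nil then show ?case by (auto simp: pword_Nil)
next
  case (Cons x xs)
  define t where "t = takeWhile (\<lambda>z. z = x) b"
  define r where "r = dropWhile (\<lambda>z. z = x) b"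
  have b: "b = t @ r" unfolding t_def r_def by simp
  have t: "t = replicate (length t) x" unfolding t_def
    by (metis (mono_tags, lifting) replicate_length_same set_takeWhileD)
  have sr: "sorted (map f r)" using Cons.prems(3) b by (simp add: sorted_append)
  have "set r \<subseteq> set xs"
  proof
    fix z assume z: "z \<in> set r"
    show "z \<in> set xs"
    proof (rule ccontr)
      assume nz: "z \<notin> set xs"
      then have zx: "z = x" using z b Cons.prems(2) by auto
      have rne: "r \<noteq> []" using z by auto
      then obtain h r' where hr: "r = h # r'" by (cases r) auto
      have "h \<noteq> x" using hd_dropWhile[of "\<lambda>z. z = x" b] rne hr unfolding r_def by auto
      then have hxs: "h \<in> set xs" using Cons.prems(2) b hr by auto
      then have "f x < f h" using Cons.prems(1) by auto
      moreover have "z \<in> set r'" using z zx hr \<open>h \<noteq> x\<close> by auto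
      then have "f h \<le> f z" using sr hr by auto
      ultimately show False using zx by simp
    qed
  qed
  then obtain ms where ms: "length ms = length xs" "r = pword xs ms"
    using Cons.IH[of r] Cons.prems(1) sr by auto
  show ?case
    by (rule exI[of _ "length t # ms"]) (use ms b t in \<open>auto simp: pword_Cons\<close>)
qed


theorem lemma5p3:
  fixes X :: "'a set" and R :: "('a list \<times> 'a list) set"
  assumes "R \<subseteq> lists X \<times> lists X"
    and "irredundant X R"
    and "normalizing X R"
    and "cancellative X R"
    and "BF X R"
  shows "(\<forall>x\<in>X. \<forall>y\<in>X. \<exists>z\<in>X. eqM R [x, y] [z, x])
    \<and> (\<forall>xs. distinct xs \<and> set xs = X \<and> xs \<noteq> [] \<longrightarrow>
        (\<forall>a\<in>lists X. \<exists>!\<nu>. \<exists>ms.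
            length ms = length xs \<and> \<nu> = pword xs ms \<and>
            eqM R a \<nu> \<and> length \<nu> = length a \<and>
            (\<forall>ms'. length ms' = length xs \<and> eqM R a (pword xs ms') \<and>
                   sum_list ms' = length a \<longrightarrow> ms = ms' \<or> lex_less ms ms')))"
proof (intro conjI allI impI ballI)
  fix x y assume "x \<in> X" "y \<in> X"
  then show "\<exists>z\<in>X. eqM R [x, y] [z, x]" using part1[OF assms] by blast
next
  fix xs a assume xs: "distinct xs \<and> set xs = X \<and> xs \<noteq> []" and a: "a \<in> lists X"
  have sw: "\<forall>x\<in>X. \<forall>y\<in>X. \<exists>w\<in>X. eqM R [y, x] [x, w]" using part1'[OF assms] by blast
  define idx where "idx = (\<lambda>z. LEAST i. xs ! i = z)"
  have idx: "idx (xs ! i) = i" if "i < length xs" for i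
    unfolding idx_def
  proof (rule Least_equality)
    fix j assume "xs ! j = xs ! i"
    then show "i \<le> j" using xs that nth_eq_iff_index_eq[of xs j i] by (cases "j < i") auto
  qed simp
  have "map idx xs = map idx (map ((!) xs) [0..<length xs])" by (simp add: map_nth)
  also have "\<dots> = [0..<length xs]" using idx by (intro nth_equalityI) auto
  finally have sx: "sorted_wrt (<) (map idx xs)" by simp
  obtain b where b: "b \<in> lists X" "eqM R a b" "length b = length a" "sorted (map idx b)"
    using sort_exists[OF sw a, of idx] by blast
  obtain ms0 where ms0: "length ms0 = length xs" "b = pword xs ms0"
    using sorted_pword[OF sx _ b(4)] b(1) xs by auto
  define S where "S = {ms. length ms = length xs \<and> eqM R a (pword xs ms) \<and> sum_list ms = length a}"
  have "ms0 \<in> S" unfolding S_def using ms0 b length_pword[OF ms0(1)] by auto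
  then obtain m where m: "m \<in> S" and mmin: "\<And>y. (y, m) \<in> lex less_than \<Longrightarrow> y \<notin> S"
    using wfE_min[OF wf_lex[OF wf_less_than]] by metis
  have lt: "{(i, j). i < j} = (less_than :: (nat \<times> nat) set)" by auto
  have minS: "m = ms' \<or> lex_less m ms'" if "ms' \<in> S" for ms'
  proof -
    have "(m, ms') \<in> lexord less_than \<or> m = ms' \<or> (ms', m) \<in> lexord less_than"
      by (rule lexord_linear) auto
    moreover have "(ms', m) \<notin> lexord less_than"
      using mmin[of ms'] that m unfolding S_def lexord_lex by auto
    ultimately show ?thesis unfolding lex_less_def lt by auto
  qed
  have prop_S: "ms \<in> S" if "length ms = length xs" "eqM R a (pword xs ms)"
      "length (pword xs ms) = length a" for ms
    unfolding S_def using that length_pword[OF that(1)] by auto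
  show "\<exists>!\<nu>. \<exists>ms. length ms = length xs \<and> \<nu> = pword xs ms \<and>
            eqM R a \<nu> \<and> length \<nu> = length a \<and>
            (\<forall>ms'. length ms' = length xs \<and> eqM R a (pword xs ms') \<and>
                   sum_list ms' = length a \<longrightarrow> ms = ms' \<or> lex_less ms ms')"
  proof (rule ex1I)
    show "\<exists>ms. length ms = length xs \<and> pword xs m = pword xs ms \<and>
            eqM R a (pword xs m) \<and> length (pword xs m) = length a \<and>
            (\<forall>ms'. length ms' = length xs \<and> eqM R a (pword xs ms') \<and>
                   sum_list ms' = length a \<longrightarrow> ms = ms' \<or> lex_less ms ms')"
      using m minS length_pword[of m xs] unfolding S_def by (intro exI[of _ m]) auto
  next
    fix \<nu> assume "\<exists>ms. length ms = length xs \<and> \<nu> = pword xs ms \<and>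
            eqM R a \<nu> \<and> length \<nu> = length a \<and>
            (\<forall>ms'. length ms' = length xs \<and> eqM R a (pword xs ms') \<and>
                   sum_list ms' = length a \<longrightarrow> ms = ms' \<or> lex_less ms ms')"
    then obtain ms where ms: "length ms = length xs" "\<nu> = pword xs ms" "eqM R a \<nu>" "length \<nu> = length a"
      and msmin: "\<forall>ms'. length ms' = length xs \<and> eqM R a (pword xs ms') \<and>
                   sum_list ms' = length a \<longrightarrow> ms = ms' \<or> lex_less ms ms'" by blast
    have msS: "ms \<in> S" using prop_S[of ms] ms by auto
    have 1: "ms = m \<or> lex_less ms m" using msmin m unfolding S_def by auto
    have 2: "m = ms \<or> lex_less m ms" using minS[OF msS] .
    have "ms = m"
    proof (rule ccontr)
      assume "ms \<noteq> m"
      then have "(ms, m) \<in> lexord less_than" "(m, ms) \<in> lexord less_than"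
        using 1 2 unfolding lex_less_def lt by auto
      then have "(ms, ms) \<in> lexord less_than" using lexord_trans trans_less_than by blast
      then show False using lexord_irreflexive[of less_than] by auto
    qed
    then show "\<nu> = pword xs m" using ms by simp
  qed
qed

end
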